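(* Local search based on the 1-norm of the inverse has no constant approximation ratio for full row rank matrices: for all integers $r\ge2$ and $n\ge 2r$ and every $K>0$, there exist a matrix $A\in\mathbb{R}^{r\times n}$ of rank $r$ and ordered $r$-subsets $T,T'$ of $\{1,\dots,n\}$ such that $A[:,T]$ is a local minimizer for the 1-norm of the inverse on the set of $r\times r$ nonsingular submatrices of $A$, $A[:,T']$ is nonsingular, and $\|A[:,T]^{-1}\|_1\ge K\,\|A[:,T']^{-1}\|_1$.
   Context: $A[:,T]$ is the submatrix of $A$ formed by the columns indexed by $T$. $\|X\|_1=\sum_{i,j}|X_{ij}|$. For a full row rank $r\times n$ matrix $A$, a nonsingular submatrix $A[:,T]$ is a local minimizer for the 1-norm of the inverse on the set of $r\times r$ nonsingular submatrices of $A$ if $\|A[:,T]^{-1}\|_1$ cannot be decreased by swapping an element of $T$ with an element of its complement in $\{1,\dots,n\}$ (among swaps yielding a nonsingular submatrix). For any $T'$ with $A[:,T']$ nonsingular, placing $A[:,T']^{-1}$ in rows $T'$ and zeros elsewhere gives a matrix $H$ with $AH=I_r$, so the conclusion shows the ratio of the local-search output's 1-norm to the optimum is unbounded. *)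

theory Defs
  imports Complex_Main "Jordan_Normal_Form.DL_Rank" "Jordan_Normal_Form.Gauss_Jordan_Elimination"
          "Jordan_Normal_Form.Determinant"
begin

definition col_submat :: "real mat \<Rightarrow> nat list \<Rightarrow> real mat" where
  "col_submat A T = mat (dim_row A) (length T) (\<lambda>(i,j). A $$ (i, T ! j))"

definition norm1_mat :: "real mat \<Rightarrow> real" where
  "norm1_mat X = (\<Sum>i<dim_row X. \<Sum>j<dim_col X. \<bar>X $$ (i,j)\<bar>)"

text \<open>Inverse of a square matrix (meaningful when it is nonsingular).\<close>
definition inv_mat :: "real mat \<Rightarrow> real mat" where
  "inv_mat C = the (mat_inverse C)"

definition ordered_subset :: "nat \<Rightarrow> nat \<Rightarrow> nat list \<Rightarrow> bool" where
  "ordered_subset r n T \<longleftrightarrow> length T = r \<and> distinct T \<and> set T \<subseteq> {0..<n}"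

definition local_min_inv_norm1 :: "real mat \<Rightarrow> nat list \<Rightarrow> bool" where
  "local_min_inv_norm1 A T \<longleftrightarrow>
     det (col_submat A T) \<noteq> 0 \<and>
     (\<forall>k < length T. \<forall>j \<in> {0..<dim_col A} - set T.
        det (col_submat A (T[k := j])) \<noteq> 0 \<longrightarrow>
        norm1_mat (inv_mat (col_submat A T)) \<le> norm1_mat (inv_mat (col_submat A (T[k := j]))))"

end

theory Submission
  imports Defs
begin

lemma inv_mat_props:
  fixes C :: "real mat"
  assumes C: "C \<in> carrier_mat m m" and d: "det C \<noteq> 0"
  shows "C * inv_mat C = 1\<^sub>m m" "inv_mat C * C = 1\<^sub>m m" "inv_mat C \<in> carrier_mat m m"
proof -
  have U: "C \<in> Units (ring_mat TYPE(real) m ())"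
    using det_non_zero_imp_unit[OF C d] .
  have "mat_inverse C \<noteq> None"
    using mat_inverse(1)[OF C, where b="()"] U by blast
  then obtain B where B: "mat_inverse C = Some B" by auto
  have "inv_mat C = B" unfolding inv_mat_def B by simp
  then show "C * inv_mat C = 1\<^sub>m m" "inv_mat C * C = 1\<^sub>m m" "inv_mat C \<in> carrier_mat m m"
    using mat_inverse(2)[OF C B] by auto
qed

lemma inv_mat_unique:
  fixes C B :: "real mat"
  assumes C: "C \<in> carrier_mat m m" and B: "B \<in> carrier_mat m m" and CB: "C * B = 1\<^sub>m m"
  shows "det C \<noteq> 0" "inv_mat C = B"
proof -
  have "det C * det B = 1" using det_mult[OF C B] CB by simp
  then show dC: "det C \<noteq> 0" by auto
  note P = inv_mat_props[OF C dC]
  have "inv_mat C = inv_mat C * (C * B)" using P(3) CB by simp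
  also have "\<dots> = (inv_mat C * C) * B" using P(3) C B by (simp add: assoc_mult_mat)
  also have "\<dots> = B" using P(2) B by simp
  finally show "inv_mat C = B" .
qed

lemma rank_le_rows:
  fixes A :: "real mat"
  assumes A: "A \<in> carrier_mat r n"
  shows "vec_space.rank r A \<le> r"
proof -
  interpret vec_space "TYPE(real)" r .
  have "set (cols A) \<subseteq> carrier_vec r" using A cols_dim by blast
  then have "subspace class_ring (span (set (cols A))) V"
    using span_is_subspace by auto
  then have "vectorspace.dim class_ring (vs (span (set (cols A)))) \<le> dim"
    using subspace_dim fin_dim_span_cols[OF A] by auto
  then show ?thesis unfolding rank_def dim_is_n by simp
qed

definition gG :: "nat \<Rightarrow> nat \<Rightarrow> nat \<Rightarrow> real" where
  "gG r i m = (if i = m then 1 else 0) - (if i = Suc m then 1 else 0) + (if i = 0 \<and> m = r - 1 then 1 else 0)"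

definition hH :: "nat \<Rightarrow> nat \<Rightarrow> real" where
  "hH i l = (if l \<le> i then 1 else -1)"

lemma GH:
  assumes r: "r \<ge> 2" and i: "i < r" and l: "l < r"
  shows "(\<Sum>j<r. gG r i j * hH j l) = (if i = l then 2 else 0)"
proof (cases i)
  case 0
  have "(\<Sum>j<r. gG r i j * hH j l) = (\<Sum>j<r. (if j = 0 then hH j l else 0) + (if j = r - 1 then hH j l else 0))"
    by (rule sum.cong) (use 0 r in \<open>auto simp: gG_def\<close>)
  also have "\<dots> = hH 0 l + hH (r - 1) l"
    using r by (simp add: sum.distrib)
  finally show ?thesis using 0 l by (auto simp: hH_def)
next
  case (Suc i')
  have "(\<Sum>j<r. gG r i j * hH j l) = (\<Sum>j<r. (if j = i then hH j l else 0) - (if j = i' then hH j l else 0))"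
    by (rule sum.cong) (use Suc r i in \<open>auto simp: gG_def\<close>)
  also have "\<dots> = hH i l - hH i' l"
    using i Suc by (simp add: sum_subtractf)
  finally show ?thesis using Suc l by (auto simp: hH_def)
qed

lemma partner:
  assumes r: "r \<ge> 2" and k: "k < r" and m: "m < r" and g: "gG r k m \<noteq> 0"
  shows "\<exists>k'<r. k' \<noteq> k \<and> \<bar>gG r k' m\<bar> = \<bar>gG r k m\<bar>"
proof (cases "m = r - 1")
  case True
  then have gi: "\<And>i. i < r \<Longrightarrow> gG r i m = (if i = r - 1 then 1 else 0) + (if i = 0 then 1 else 0)"
    using r by (auto simp: gG_def)
  show ?thesis
  proof (cases "k = 0")
    case True
    then show ?thesis using gi[of k] gi[of "r-1"] r k by (intro exI[of _ "r - 1"]) auto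
  next
    case False
    then have "k = r - 1" using gi[OF k] g by (auto split: if_splits)
    then show ?thesis using gi[of k] gi[of 0] r k by (intro exI[of _ 0]) auto
  qed
next
  case False
  then have gi: "\<And>i. gG r i m = (if i = m then 1 else 0) - (if i = Suc m then 1 else 0)"
    by (auto simp: gG_def)
  show ?thesis
  proof (cases "k = m")
    case True
    then show ?thesis using gi[of k] gi[of "Suc m"] False m by (intro exI[of _ "Suc m"]) auto
  next
    case ne: False
    then have "k = Suc m" using gi[of k] g by (auto split: if_splits)
    then show ?thesis using gi[of k] gi[of m] m by (intro exI[of _ m]) auto
  qed
qed

lemma swap_norm:
  fixes B C :: "real mat"
  assumes C: "C \<in> carrier_mat r r" and B: "B \<in> carrier_mat r r" and BC: "B * C = 1\<^sub>m r"
    and k: "k < r"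
    and Cid: "\<And>i p. i < r \<Longrightarrow> p < r \<Longrightarrow> p \<noteq> k \<Longrightarrow> C $$ (i,p) = (if i = p then 1 else 0)"
    and part: "C $$ (k,k) \<noteq> 0 \<Longrightarrow> \<exists>k'<r. k' \<noteq> k \<and> \<bar>C $$ (k',k)\<bar> = \<bar>C $$ (k,k)\<bar>"
  shows "norm1_mat B \<ge> r"
proof -
  have e: "(\<Sum>q<r. B $$ (i,q) * C $$ (q,p)) = (if i = p then 1 else 0)" if "i < r" "p < r" for i p
  proof -
    have "(B * C) $$ (i,p) = (if i = p then 1 else 0)" using BC that by simp
    moreover have "(B * C) $$ (i,p) = (\<Sum>q<r. B $$ (i,q) * C $$ (q,p))"
      using that B C by (simp add: scalar_prod_def lessThan_atLeast0)
    ultimately show ?thesis by simp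
  qed
  have Bo: "B $$ (i,p) = (if i = p then 1 else 0)" if "i < r" "p < r" "p \<noteq> k" for i p
  proof -
    have "(\<Sum>q<r. B $$ (i,q) * C $$ (q,p)) = (\<Sum>q<r. if q = p then B $$ (i,q) else 0)"
      by (rule sum.cong) (use Cid that in auto)
    also have "\<dots> = B $$ (i,p)" using that by simp
    finally show ?thesis using e[OF that(1,2)] by simp
  qed
  have Bk: "B $$ (i,k) * C $$ (k,k) + (if i \<noteq> k then C $$ (i,k) else 0) = (if i = k then 1 else 0)"
    if "i < r" for i
  proof -
    have "(\<Sum>q<r. B $$ (i,q) * C $$ (q,k)) = (\<Sum>q<r. (if q = k then B $$ (i,k) * C $$ (k,k) else 0)
        + (if q = i \<and> i \<noteq> k then C $$ (i,k) else 0))"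
    proof (rule sum.cong)
      fix q assume q: "q \<in> {..<r}"
      show "B $$ (i,q) * C $$ (q,k) = (if q = k then B $$ (i,k) * C $$ (k,k) else 0)
        + (if q = i \<and> i \<noteq> k then C $$ (i,k) else 0)"
      proof (cases "q = k")
        case False
        then show ?thesis using Bo[OF that _ False] q by auto
      qed simp
    qed simp
    also have "\<dots> = B $$ (i,k) * C $$ (k,k) + (if i \<noteq> k then C $$ (i,k) else 0)"
      using that k by (simp add: sum.distrib)
    finally show ?thesis using e[OF that k] by simp
  qed
  have Ckk: "C $$ (k,k) \<noteq> 0" using Bk[OF k] by auto
  then obtain k' where k': "k' < r" "k' \<noteq> k" "\<bar>C $$ (k',k)\<bar> = \<bar>C $$ (k,k)\<bar>" using part by blast
  have "B $$ (k',k) * C $$ (k,k) = - C $$ (k',k)" using Bk[OF k'(1)] k'(2) by simp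
  then have "\<bar>B $$ (k',k)\<bar> * \<bar>C $$ (k,k)\<bar> = \<bar>C $$ (k,k)\<bar>" using k'(3) by (metis abs_minus_cancel abs_mult)
  then have Bk'1: "\<bar>B $$ (k',k)\<bar> = 1" using Ckk by simp
  have col: "(\<Sum>i<r. \<bar>B $$ (i,p)\<bar>) \<ge> 1" if p: "p < r" for p
  proof (cases "p = k")
    case True
    have "\<bar>B $$ (k',p)\<bar> \<le> (\<Sum>i<r. \<bar>B $$ (i,p)\<bar>)"
      by (rule member_le_sum) (use k' in auto)
    then show ?thesis using Bk'1 True by simp
  next
    case False
    have "\<bar>B $$ (p,p)\<bar> \<le> (\<Sum>i<r. \<bar>B $$ (i,p)\<bar>)"
      by (rule member_le_sum) (use p in auto)
    then show ?thesis using Bo[OF p p False] by simp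
  qed
  have "norm1_mat B = (\<Sum>i<r. \<Sum>p<r. \<bar>B $$ (i,p)\<bar>)"
    unfolding norm1_mat_def using B by simp
  also have "\<dots> = (\<Sum>p<r. \<Sum>i<r. \<bar>B $$ (i,p)\<bar>)"
    by (rule sum.swap)
  also have "\<dots> \<ge> (\<Sum>p<r. 1)" by (rule sum_mono) (use col in auto)
  finally show ?thesis by simp
qed

lemma rank_ge_unit:
  fixes A :: "real mat"
  assumes A: "A \<in> carrier_mat r n" and cols: "\<And>i. i < r \<Longrightarrow> col A i = unit_vec r i" and rn: "r \<le> n"
  shows "vec_space.rank r A \<ge> r"
proof -
  interpret vec_space "TYPE(real)" r .
  have sub: "set (unit_vecs r) \<subseteq> set (cols A)"
  proof
    fix v :: "real vec" assume "v \<in> set (unit_vecs r)"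
    then obtain i where i: "i < r" "v = unit_vec r i" unfolding unit_vecs_def by auto
    have v: "v = cols A ! i" using cols[OF i(1)] A rn i by auto
    have "i < length (cols A)" using i A rn by auto
    then show "v \<in> set (cols A)" using v nth_mem by metis
  qed
  have li: "lin_indpt (set (unit_vecs r))" using unit_vecs_basis unfolding basis_def by blast
  have "card (set (unit_vecs r :: real vec list)) = r" using distinct_card[OF unit_vecs_distinct] by simp
  then show ?thesis using rank_ge_card_indpt[OF A sub li] by simp
qed

theorem theorem6p5:
  fixes r n :: nat and K :: real
  assumes "r \<ge> 2" and "n \<ge> 2 * r" and "K > 0"
  shows "\<exists>A T T'. A \<in> carrier_mat r n \<and> vec_space.rank r A = r \<and>
           ordered_subset r n T \<and> ordered_subset r n T' \<and>
           local_min_inv_norm1 A T \<and> det (col_submat A T') \<noteq> 0 \<and>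
           norm1_mat (inv_mat (col_submat A T)) \<ge> K * norm1_mat (inv_mat (col_submat A T'))"
proof -
  note r = assms(1) and n = assms(2) and K = assms(3)
  define M where "M = K * real r"
  have M: "M > 0" using K r by (simp add: M_def)
  define A where "A = mat r n (\<lambda>(i,j). if j < r then (if i = j then 1 else 0)
      else if j < 2*r then M * gG r i (j - r) else (0::real))"
  define T where "T = [0..<r]"
  define T' where "T' = [r..<2*r]"
  have Ac: "A \<in> carrier_mat r n" unfolding A_def by simp
  have AT: "col_submat A T = 1\<^sub>m r"
    by (rule eq_matI) (use n in \<open>auto simp: col_submat_def A_def T_def\<close>)
  define Bi where "Bi = mat r r (\<lambda>(i,l). hH i l / (2*M))"
  have AT': "col_submat A T' = mat r r (\<lambda>(i,j). M * gG r i j)"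
    by (rule eq_matI) (use n in \<open>auto simp: col_submat_def A_def T'_def\<close>)
  have prod: "col_submat A T' * Bi = 1\<^sub>m r"
  proof (rule eq_matI)
    fix i l assume il: "i < dim_row (1\<^sub>m r)" "l < dim_col (1\<^sub>m r)"
    then have i: "i < r" and l: "l < r" by auto
    have "(col_submat A T' * Bi) $$ (i,l) = (\<Sum>j<r. M * gG r i j * (hH j l / (2*M)))"
      using i l unfolding AT' Bi_def by (simp add: scalar_prod_def lessThan_atLeast0)
    also have "\<dots> = (\<Sum>j<r. gG r i j * hH j l) / 2"
      unfolding sum_divide_distrib using M by (intro sum.cong) auto
    also have "\<dots> = 1\<^sub>m r $$ (i,l)" using GH[OF r i l] i l by simp
    finally show "(col_submat A T' * Bi) $$ (i,l) = 1\<^sub>m r $$ (i,l)" .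
  qed (auto simp: AT' Bi_def)
  have AT'c: "col_submat A T' \<in> carrier_mat r r" unfolding AT' by simp
  have Bic: "Bi \<in> carrier_mat r r" unfolding Bi_def by simp
  note U' = inv_mat_unique[OF AT'c Bic prod]
  have nBi: "norm1_mat Bi = real r * real r / (2*M)"
  proof -
    have "norm1_mat Bi = (\<Sum>i<r. \<Sum>l<r. 1 / (2*M))"
      unfolding norm1_mat_def Bi_def using M by (intro sum.cong) (auto simp: hH_def)
    then show ?thesis by simp
  qed
  have I1: "inv_mat (1\<^sub>m r) = 1\<^sub>m r" using inv_mat_unique(2)[of "1\<^sub>m r" r "1\<^sub>m r"] by simp
  have nI: "norm1_mat (1\<^sub>m r :: real mat) = real r"
  proof -
    have "norm1_mat (1\<^sub>m r :: real mat) = (\<Sum>i<r. \<Sum>l<r. if l = i then 1 else 0)"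
      unfolding norm1_mat_def by (intro sum.cong) auto
    then show ?thesis by simp
  qed
  have ineq: "norm1_mat (inv_mat (col_submat A T)) \<ge> K * norm1_mat (inv_mat (col_submat A T'))"
    unfolding AT I1 nI U'(2) nBi M_def using K r by (simp add: field_simps)
  have rank: "vec_space.rank r A = r"
  proof (rule antisym)
    show "vec_space.rank r A \<le> r" by (rule rank_le_rows[OF Ac])
    show "vec_space.rank r A \<ge> r"
    proof (rule rank_ge_unit[OF Ac])
      fix i assume i: "i < r"
      show "col A i = unit_vec r i"
        by (rule eq_vecI) (use i n in \<open>auto simp: A_def\<close>)
    qed (use n in auto)
  qed
  have os: "ordered_subset r n T" "ordered_subset r n T'"
    unfolding ordered_subset_def T_def T'_def using n by auto
  have lm: "local_min_inv_norm1 A T"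
    unfolding local_min_inv_norm1_def
  proof (intro conjI allI impI ballI)
    show "det (col_submat A T) \<noteq> 0" unfolding AT by simp
    fix k j assume k: "k < length T" and j: "j \<in> {0..<dim_col A} - set T"
      and d: "det (col_submat A (T[k := j])) \<noteq> 0"
    have kr: "k < r" using k by (simp add: T_def)
    have jr: "r \<le> j" "j < n" using j Ac by (auto simp: T_def)
    define C where "C = col_submat A (T[k := j])"
    have Cc: "C \<in> carrier_mat r r" unfolding C_def col_submat_def T_def using Ac by simp
    have Ce: "C $$ (i,p) = (if p = k then A $$ (i,j) else if i = p then 1 else 0)" if "i < r" "p < r" for i p
      using that kr jr Ac unfolding C_def col_submat_def T_def by (auto simp: A_def)
    note P = inv_mat_props[OF Cc d[folded C_def]]
    have "norm1_mat (inv_mat C) \<ge> r"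
    proof (rule swap_norm[OF Cc P(3) P(2) kr])
      fix i p assume "i < r" "p < r" "p \<noteq> k"
      then show "C $$ (i,p) = (if i = p then 1 else 0)" using Ce by simp
    next
      assume nz: "C $$ (k,k) \<noteq> 0"
      have jj: "j < 2*r"
      proof (rule ccontr)
        assume "\<not> j < 2*r"
        then have "C $$ (k,k) = 0" using Ce[OF kr kr] jr kr by (simp add: A_def)
        with nz show False ..
      qed
      define m where "m = j - r"
      have m: "m < r" using jj jr by (simp add: m_def)
      have Cm: "C $$ (i,k) = M * gG r i m" if "i < r" for i
        using Ce[OF that kr] jr jj that by (simp add: A_def m_def)
      have "gG r k m \<noteq> 0" using nz Cm[OF kr] by simp
      then obtain k' where "k' < r" "k' \<noteq> k" "\<bar>gG r k' m\<bar> = \<bar>gG r k m\<bar>"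
        using partner[OF r kr m] by blast
      then show "\<exists>k'<r. k' \<noteq> k \<and> \<bar>C $$ (k',k)\<bar> = \<bar>C $$ (k,k)\<bar>"
        using Cm[OF kr] Cm M by (intro exI[of _ k']) (auto simp: abs_mult)
    qed
    then show "norm1_mat (inv_mat (col_submat A T)) \<le> norm1_mat (inv_mat (col_submat A (T[k := j])))"
      unfolding AT I1 nI C_def[symmetric] .
  qed
  show ?thesis
    using Ac rank os lm U'(1) ineq by blast
qed

end
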